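(* Let $(\mathbb{R},\nu,\tau,\tau^{*})$ be a probabilistic normed space on the real line whose probabilistic norm $\nu$ has the LG-property, i.e. for every $x>0$, $\lim_{p\to\infty}\nu_{p}(x)=0$. If $A\subset\mathbb{R}$ is $D$-bounded, then $A$ is bounded in the classical sense (i.e. there is $k>0$ with $|p|\le k$ for all $p\in A$).
   Context: $\Delta^{+}$ is the set of functions $F:[-\infty,+\infty]\to[0,1]$ that are left-continuous on $\mathbb{R}$, nondecreasing, with $F(0)=0$ and $F(+\infty)=1$ (distribution functions), ordered pointwise; $D^{+}=\{F\in\Delta^{+}: l^{-}F(+\infty)=1\}$, where $l^{-}f(x)=\lim_{t\to x^{-}}f(t)$. $\varepsilon_0$ is the d.f. equal to $0$ for $x\le 0$ and $1$ for $x>0$. A triangle function is a map $\tau:\Delta^+\times\Delta^+\to\Delta^+$ that is associative, commutative, nondecreasing in each argument, and has $\varepsilon_0$ as unit. A probabilistic normed (PN) space is a quadruple $(V,\nu,\tau,\tau^* )$ with $V$ a real vector space, $\tau\le\tau^*$ continuous triangle functions (continuity w.r.t. weak convergence), and $\nu:V\to\Delta^+$, $p\mapsto\nu_p$, such that for all $p,q\in V$: (N1) $\nu_p=\varepsilon_0$ iff $p=\theta$ (the zero vector); (N2) $\nu_{-p}=\nu_p$; (N3) $\nu_{p+q}\ge\tau(\nu_p,\nu_q)$; (N4) $\nu_p\le\tau^*(\nu_{\lambda p},\nu_{(1-\lambda)p})$ for all $\lambda\in[0,1]$. For a nonempty $A\subseteq V$, the probabilistic radius is $R_A(x)=l^{-}\inf\{\nu_p(x):p\in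 A\}$ for $x\in[0,+\infty)$ and $R_A(+\infty)=1$; $A$ is called $D$-bounded if $R_A\in D^{+}$. *)

theory Defs
  imports "HOL-Analysis.Analysis" "HOL-Library.Extended_Real"
begin

definition in_Delta :: "(ereal \<Rightarrow> real) \<Rightarrow> bool" where
  "in_Delta F \<longleftrightarrow>
     (\<forall>x. 0 \<le> F x \<and> F x \<le> 1) \<and> mono F \<and>
     (\<forall>x::real. ((\<lambda>t::real. F (ereal t)) \<longlongrightarrow> F (ereal x)) (at_left x)) \<and>
     F 0 = 0 \<and> F PInfty = 1"

text \<open>D+ : l^- F(+\<infinity>) = 1, i.e. F(x) tends to 1 as real x tends to +\<infinity>.\<close>
definition in_D :: "(ereal \<Rightarrow> real) \<Rightarrow> bool" where
  "in_D F \<longleftrightarrow> in_Delta F \<and> ((\<lambda>t::real. F (ereal t)) \<longlongrightarrow> 1) at_top"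

definition eps0 :: "ereal \<Rightarrow> real" where
  "eps0 x = (if x \<le> 0 then 0 else 1)"

definition weak_conv :: "(nat \<Rightarrow> ereal \<Rightarrow> real) \<Rightarrow> (ereal \<Rightarrow> real) \<Rightarrow> bool" where
  "weak_conv Fn F \<longleftrightarrow>
     (\<forall>x::real. isCont (\<lambda>t::real. F (ereal t)) x \<longrightarrow> (\<lambda>n. Fn n (ereal x)) \<longlonglongrightarrow> F (ereal x))"

definition triangle_function ::
  "((ereal \<Rightarrow> real) \<Rightarrow> (ereal \<Rightarrow> real) \<Rightarrow> (ereal \<Rightarrow> real)) \<Rightarrow> bool" where
  "triangle_function T \<longleftrightarrow>
     (\<forall>F G. in_Delta F \<longrightarrow> in_Delta G \<longrightarrow> in_Delta (T F G)) \<and>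
     (\<forall>F G. in_Delta F \<longrightarrow> in_Delta G \<longrightarrow> T F G = T G F) \<and>
     (\<forall>F G H. in_Delta F \<longrightarrow> in_Delta G \<longrightarrow> in_Delta H \<longrightarrow> T (T F G) H = T F (T G H)) \<and>
     (\<forall>F F' G. in_Delta F \<longrightarrow> in_Delta F' \<longrightarrow> in_Delta G \<longrightarrow> F \<le> F' \<longrightarrow> T F G \<le> T F' G) \<and>
     (\<forall>F. in_Delta F \<longrightarrow> T F eps0 = F)"

text \<open>Continuity w.r.t. weak convergence (the topology is metrizable, so sequential).\<close>
definition continuous_tf ::
  "((ereal \<Rightarrow> real) \<Rightarrow> (ereal \<Rightarrow> real) \<Rightarrow> (ereal \<Rightarrow> real)) \<Rightarrow> bool" where
  "continuous_tf T \<longleftrightarrow>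
     (\<forall>Fn F Gn G. (\<forall>n. in_Delta (Fn n)) \<longrightarrow> (\<forall>n. in_Delta (Gn n)) \<longrightarrow> in_Delta F \<longrightarrow> in_Delta G \<longrightarrow>
        weak_conv Fn F \<longrightarrow> weak_conv Gn G \<longrightarrow> weak_conv (\<lambda>n. T (Fn n) (Gn n)) (T F G))"

definition PN_space ::
  "('a::real_vector \<Rightarrow> ereal \<Rightarrow> real) \<Rightarrow>
   ((ereal \<Rightarrow> real) \<Rightarrow> (ereal \<Rightarrow> real) \<Rightarrow> (ereal \<Rightarrow> real)) \<Rightarrow>
   ((ereal \<Rightarrow> real) \<Rightarrow> (ereal \<Rightarrow> real) \<Rightarrow> (ereal \<Rightarrow> real)) \<Rightarrow> bool" where
  "PN_space \<nu> T Ts \<longleftrightarrow>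
     triangle_function T \<and> continuous_tf T \<and>
     triangle_function Ts \<and> continuous_tf Ts \<and>
     (\<forall>F G. in_Delta F \<longrightarrow> in_Delta G \<longrightarrow> T F G \<le> Ts F G) \<and>
     (\<forall>p. in_Delta (\<nu> p)) \<and>
     (\<forall>p. \<nu> p = eps0 \<longleftrightarrow> p = 0) \<and>
     (\<forall>p. \<nu> (- p) = \<nu> p) \<and>
     (\<forall>p q. \<nu> (p + q) \<ge> T (\<nu> p) (\<nu> q)) \<and>
     (\<forall>p l. 0 \<le> l \<and> l \<le> 1 \<longrightarrow> \<nu> p \<le> Ts (\<nu> (l *\<^sub>R p)) (\<nu> ((1 - l) *\<^sub>R p)))"

text \<open>Probabilistic radius; for x<0 (outside the paper's domain [0,+\<infinity>]) set to 0.\<close>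
definition prob_radius :: "('a \<Rightarrow> ereal \<Rightarrow> real) \<Rightarrow> 'a set \<Rightarrow> ereal \<Rightarrow> real" where
  "prob_radius \<nu> A x =
     (case x of
        ereal r \<Rightarrow> (if r < 0 then 0 else Lim (at_left r) (\<lambda>t::real. INF p\<in>A. \<nu> p (ereal t)))
      | PInfty \<Rightarrow> 1
      | MInfty \<Rightarrow> 0)"

definition D_bounded :: "('a \<Rightarrow> ereal \<Rightarrow> real) \<Rightarrow> 'a set \<Rightarrow> bool" where
  "D_bounded \<nu> A \<longleftrightarrow> A \<noteq> {} \<and> in_D (prob_radius \<nu> A)"

end

theory Submission
  imports Defs
begin

theorem lemma13:
  fixes \<nu> :: "real \<Rightarrow> ereal \<Rightarrow> real"
    and T Ts :: "(ereal \<Rightarrow> real) \<Rightarrow> (ereal \<Rightarrow> real) \<Rightarrow> (ereal \<Rightarrow> real)"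
    and A :: "real set"
  assumes "PN_space \<nu> T Ts"
    and LG: "\<forall>x::real. x > 0 \<longrightarrow> ((\<lambda>p. \<nu> p (ereal x)) \<longlongrightarrow> 0) at_top"
    and "D_bounded \<nu> A"
  shows "\<exists>k>0. \<forall>p\<in>A. \<bar>p\<bar> \<le> k"
proof -
  have Ane: "A \<noteq> {}" and inD: "in_D (prob_radius \<nu> A)" using assms(3) by (auto simp: D_bounded_def)
  have Dl: "\<And>p. in_Delta (\<nu> p)" and sym: "\<And>p. \<nu> (- p) = \<nu> p"
    using assms(1) by (auto simp: PN_space_def)
  have nn: "\<And>p x. 0 \<le> \<nu> p x" and le1: "\<And>p x. \<nu> p x \<le> 1" and mo: "\<And>p. mono (\<nu> p)"
    using Dl by (auto simp: in_Delta_def)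
  define g where "g t = (INF p\<in>A. \<nu> p (ereal t))" for t
  have bdd: "bdd_below ((\<lambda>p. \<nu> p (ereal t)) ` A)" for t
    using nn by (intro bdd_belowI2[where m=0]) auto
  have gmono: "g s \<le> g t" if "s \<le> t" for s t
    unfolding g_def
  proof (rule cINF_mono[OF Ane bdd])
    fix p assume "p \<in> A"
    then show "\<exists>q\<in>A. \<nu> q (ereal s) \<le> \<nu> p (ereal t)"
      using mo[of p] that \<open>p \<in> A\<close> by (auto simp: mono_def intro!: bexI[of _ p])
  qed
  have gle1: "g t \<le> 1" for t
  proof -
    obtain p where "p \<in> A" using Ane by auto
    then have "g t \<le> \<nu> p (ereal t)" unfolding g_def by (rule cINF_lower[OF bdd])
    then show ?thesis using le1[of p "ereal t"] by linarith
  qed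
  have lim: "(g \<longlongrightarrow> Sup (g ` ({..<r} \<inter> UNIV))) (at r within ({..<r} \<inter> UNIV))" for r
    by (rule Lim_left_bound[where K=1]) (auto intro: gmono gle1)
  have Rle: "prob_radius \<nu> A (ereal r) \<le> g r" if "r \<ge> 0" for r
  proof -
    have L: "(g \<longlongrightarrow> Sup (g ` {..<r})) (at_left r)" using lim[of r] by (simp add: lessThan_def)
    have "prob_radius \<nu> A (ereal r) = Lim (at_left r) g"
      using that by (simp add: prob_radius_def g_def[abs_def])
    also have "\<dots> = Sup (g ` {..<r})"
      using L by (intro tendsto_Lim) (simp_all add: trivial_limit_at_left_real)
    also have "\<dots> \<le> g r"
      by (rule cSup_least) (auto intro: gmono)
    finally show ?thesis .
  qed
  have "((\<lambda>t::real. prob_radius \<nu> A (ereal t)) \<longlongrightarrow> 1) at_top" using inD by (simp add: in_D_def)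
  then have "eventually (\<lambda>t. prob_radius \<nu> A (ereal t) > 1/2) at_top"
    by (rule order_tendstoD) simp
  moreover have "eventually (\<lambda>t::real. t \<ge> 1) at_top" by (rule eventually_ge_at_top)
  ultimately have "eventually (\<lambda>t. prob_radius \<nu> A (ereal t) > 1/2 \<and> t \<ge> 1) at_top"
    by (rule eventually_conj)
  then obtain t0 where t0: "prob_radius \<nu> A (ereal t0) > 1/2" "t0 \<ge> 1"
    by (auto simp: eventually_at_top_linorder)
  have gt0: "g t0 > 1/2" using Rle[of t0] t0 by simp
  have big: "\<nu> p (ereal t0) > 1/2" if "p \<in> A" for p
    using cINF_lower[OF bdd that, of t0] gt0 unfolding g_def by linarith
  have "((\<lambda>p. \<nu> p (ereal t0)) \<longlongrightarrow> 0) at_top" using LG t0 by simp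
  then have "eventually (\<lambda>p. \<nu> p (ereal t0) < 1/2) at_top"
    by (rule order_tendstoD) simp
  then obtain N where N: "\<And>q. q \<ge> N \<Longrightarrow> \<nu> q (ereal t0) < 1/2"
    by (auto simp: eventually_at_top_linorder)
  show ?thesis
  proof (intro exI[of _ "max N 1"] conjI ballI)
    fix p assume pA: "p \<in> A"
    show "\<bar>p\<bar> \<le> max N 1"
    proof (rule ccontr)
      assume "\<not> ?thesis"
      then have "\<bar>p\<bar> \<ge> N" by simp
      then have "\<nu> \<bar>p\<bar> (ereal t0) < 1/2" by (rule N)
      moreover have "\<nu> \<bar>p\<bar> = \<nu> p" using sym[of p] by (cases "p \<ge> 0") auto
      ultimately show False using big[OF pA] by simp
    qed
  qed simp
qed

end
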